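(* Let $\frac12<s<1$, $M\in\mathbb R\setminus\{0\}$, let $\gamma=\gamma(s)\ge\pi/2$ be the gap constant, and let $c\in(0,\gamma)\cup(\gamma,\infty)$. Let $$\mathcal V=\left\{\sqrt{3\left(\frac{\mu_n^1}{2\rho_n^{1/(2s)}}\right)^2+\rho_n^{1-\frac1s}}:\ n\ge1\right\}.$$ (a) If $c\notin\mathcal V$, then for each $N\ge1$ there is $\upsilon=\upsilon(N,c)>0$ such that $|\lambda_n^j-\lambda_m^k|\ge\upsilon$ for all $(n,j),(m,k)\in S$ with $(n,j)\ne(m,k)$, $1\le|n|,|m|\le N$ and $j,k\in\{2,3\}$. (b) If $c\in\mathcal V$, then there is a unique $n_c\ge1$ such that $\lambda_{-n_c}^2=\lambda_{n_c}^3$, and for each $N\ge1$ there is $\upsilon=\upsilon(N,c)>0$ such that $|\lambda_n^j-\lambda_m^k|\ge\upsilon$ for all $(n,j),(m,k)\in S$ with $(n,j)\neq(m,k)$, $1\le|n|,|m|\le N$, $j,k\in\{2,3\}$, except for the pair $\{(n,j),(m,k)\}=\{(-n_c,2),(n_c,3)\}$.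
   Context: $(-d_x^2)^s$ denotes the fractional Laplacian; $0<\rho_1\le\rho_2\le\cdots\to\infty$ are the eigenvalues (with multiplicity) of its realization on $L^2(-1,1)$ with zero exterior Dirichlet condition. Standing facts used for $\frac12<s<1$: the eigenvalues $\rho_n$ are simple, and there is a constant $\gamma=\gamma(s)\ge\pi/2$ such that $\rho_{n+1}^{1/(2s)}-\rho_n^{1/(2s)}\ge\gamma$ for all $n$ large enough. Fix $M\in\mathbb R\setminus\{0\}$. For $n\ge1$, $\mu_n^1$ is the unique real root of $\mu^3+\rho_n\mu-M\rho_n=0$ (it lies strictly between $0$ and $M$), $\mu_n^2=-\frac{\mu_n^1}{2}+i\sqrt{3(\mu_n^1/2)^2+\rho_n}$ and $\mu_n^3=\overline{\mu_n^2}$. For $c\in\mathbb R$, $\mathbb Z^*=\mathbb Z\setminus\{0\}$, $S=\{(n,j):n\in\mathbb Z^*,\ j\in\{1,2,3\}\}$ and $\lambda_n^j=\mu_{|n|}^j+i\,\mathrm{sgn}(n)\,c\,\rho_{|n|}^{1/(2s)}$ for $(n,j)\in S$. *)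

theory Defs
  imports "HOL-Analysis.Analysis"
begin

text \<open>The eigenvalues rho_1 <= rho_2 <= ... of the Dirichlet fractional Laplacian
  are modelled as an abstract sequence rho :: nat => real (index 0 unused),
  subject to the standing facts stated as hypotheses of the theorem.\<close>

definition mu1 :: "real \<Rightarrow> real \<Rightarrow> real" where
  "mu1 M r = (THE x. x ^ 3 + r * x - M * r = 0)"

definition mu2 :: "real \<Rightarrow> real \<Rightarrow> complex" where
  "mu2 M r = Complex (- mu1 M r / 2) (sqrt (3 * (mu1 M r / 2)^2 + r))"

definition mu3 :: "real \<Rightarrow> real \<Rightarrow> complex" where
  "mu3 M r = cnj (mu2 M r)"

definition mu :: "real \<Rightarrow> real \<Rightarrow> nat \<Rightarrow> complex" where
  "mu M r j = (if j = 1 then complex_of_real (mu1 M r) else if j = 2 then mu2 M r else mu3 M r)"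

definition lam :: "real \<Rightarrow> real \<Rightarrow> real \<Rightarrow> (nat \<Rightarrow> real) \<Rightarrow> int \<Rightarrow> nat \<Rightarrow> complex" where
  "lam s M c rho n j =
     mu M (rho (nat \<bar>n\<bar>)) j
     + \<i> * complex_of_real (of_int (sgn n) * c * rho (nat \<bar>n\<bar>) powr (1 / (2 * s)))"

definition Vset :: "real \<Rightarrow> real \<Rightarrow> (nat \<Rightarrow> real) \<Rightarrow> real set" where
  "Vset s M rho = {sqrt (3 * (mu1 M (rho n) / (2 * rho n powr (1 / (2 * s))))^2
                        + rho n powr (1 - 1 / s)) | n. n \<ge> 1}"

end

theory Submission
  imports Defs
begin


lemma cube_strict: fixes x y r :: real assumes "x < y" "r > 0"
  shows "x^3 + r*x < y^3 + r*y"
proof -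
  have q: "x^2+x*y+y^2 + r > 0"
  proof -
    have "x^2+x*y+y^2 = ((x+y)^2 + x^2 + y^2)/2" by (simp add: power2_eq_square algebra_simps)
    moreover have "((x+y)^2 + x^2 + y^2)/2 \<ge> 0" by simp
    ultimately show ?thesis using assms by linarith
  qed
  have "(y^3 + r*y) - (x^3 + r*x) = (y - x) * (x^2+x*y+y^2 + r)"
    by (simp add: power2_eq_square power3_eq_cube algebra_simps)
  moreover have "(y - x) * (x^2+x*y+y^2 + r) > 0" using q assms by simp
  ultimately show ?thesis by linarith
qed

lemma mu1_root: assumes "r > 0" shows "(mu1 M r)^3 + r * mu1 M r - M*r = 0"
proof -
  let ?g = "\<lambda>x::real. x^3 + r*x - M*r"
  have "\<exists>x\<ge>-\<bar>M\<bar>. x \<le> \<bar>M\<bar> \<and> ?g x = 0"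
  proof (rule IVT)
    have a1: "(-M)*r \<le> \<bar>M\<bar>*r" using mult_right_mono[OF abs_ge_minus_self[of M], of r] assms by simp
    have a2: "M*r \<le> \<bar>M\<bar>*r" by (rule mult_right_mono) (use assms in auto)
    note a = a1 a2
    have b: "(-\<bar>M\<bar>)^3 = - (\<bar>M\<bar>^3)" by simp
    have c: "\<bar>M\<bar>^3 \<ge> 0" by simp
    have d: "r*\<bar>M\<bar> = \<bar>M\<bar>*r" by simp
    show "?g (-\<bar>M\<bar>) \<le> 0" using a b c d by linarith
    show "0 \<le> ?g \<bar>M\<bar>" using a c d by linarith
    show "- \<bar>M\<bar> \<le> \<bar>M\<bar>" by simp
    show "\<forall>x. - \<bar>M\<bar> \<le> x \<and> x \<le> \<bar>M\<bar> \<longrightarrow> isCont ?g x" by (intro allI impI continuous_intros)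
  qed
  then obtain x where x: "?g x = 0" by blast
  have u: "y = x" if "?g y = 0" for y
  proof (cases y x rule: linorder_cases)
    case less thus ?thesis using cube_strict[OF less assms] x that by simp
  next
    case greater thus ?thesis using cube_strict[OF greater assms] x that by simp
  qed
  have ex1: "\<exists>!x. ?g x = 0" using x u by blast
  have "?g (THE x. ?g x = 0) = 0" by (rule theI'[OF ex1])
  thus ?thesis unfolding mu1_def by simp
qed

lemma mu1_t: assumes "r > 0" "M \<noteq> 0"
  obtains t where "0 < t" "t < 1" "M^2 * t^3 = r * (1 - t)" "mu1 M r = M * t"
proof -
  define t where "t = mu1 M r / M"
  have mt: "mu1 M r = M * t" using assms(2) unfolding t_def by simp
  have e: "(M*t)^3 + r*(M*t) - M*r = 0" using mu1_root[OF assms(1), of M] mt by simp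
  have "M * (M^2 * t^3 - r * (1 - t)) = 0" using e by (simp add: algebra_simps power3_eq_cube power2_eq_square)
  hence eq: "M^2 * t^3 = r * (1 - t)" using assms by simp
  have M2: "M^2 > 0" using assms by simp
  have t0: "0 < t"
  proof (rule ccontr)
    assume "\<not> 0 < t" 
    hence tl: "t \<le> 0" by simp
    have "t^3 = t * t^2" by (simp add: power3_eq_cube power2_eq_square)
    moreover have "t * t^2 \<le> 0" using tl by (simp add: mult_nonpos_nonneg)
    moreover have "r*(1-t) > 0" using assms tl by simp
    ultimately have "t^3 \<le> 0" "r*(1-t) > 0" by auto
    moreover have "M^2 * t^3 \<le> 0" using calculation(1) M2 by (simp add: mult_nonneg_nonpos)
    ultimately show False using eq by linarith
  qed
  then have "M^2 * t^3 > 0" using M2 by simp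
  have "t < 1"
  proof (rule ccontr)
    assume "\<not> t < 1" hence "r*(1-t) \<le> 0" using assms(1) by (simp add: mult_nonneg_nonpos)
    thus False using eq \<open>M^2 * t^3 > 0\<close> by linarith
  qed
  thus ?thesis using that t0 eq mt by blast
qed

lemma mu1_inj: assumes "r1 > 0" "r2 > 0" "M \<noteq> 0" "mu1 M r1 = mu1 M r2" shows "r1 = r2"
proof -
  obtain t where t: "M^2 * t^3 = r1 * (1 - t)" "t < 1" "mu1 M r1 = M * t" using mu1_t[OF assms(1,3)] by blast
  obtain u where u: "M^2 * u^3 = r2 * (1 - u)" "mu1 M r2 = M * u" using mu1_t[OF assms(2,3)] by blast
  have "u = t" using t(3) u(2) assms(3,4) by simp
  thus ?thesis using t u by simp
qed


lemma V_decr: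
  assumes s: "1/2 < s" "s < 1" and M: "M \<noteq> 0" and r: "0 < r1" "r1 < r2"
  shows "3*(mu1 M r2/(2*r2 powr (1/(2 * s))))^2 + r2 powr (1-1/s)
       < 3*(mu1 M r1/(2*r1 powr (1/(2 * s))))^2 + r1 powr (1-1/s)"
proof -
  have r2: "0 < r2" using r by linarith
  obtain t1 where t1: "0 < t1" "t1 < 1" "M^2 * t1^3 = r1 * (1 - t1)" "mu1 M r1 = M * t1"
    using mu1_t[OF r(1) M] by blast
  obtain t2 where t2: "0 < t2" "t2 < 1" "M^2 * t2^3 = r2 * (1 - t2)" "mu1 M r2 = M * t2"
    using mu1_t[OF r2 M] by blast
  have M2: "M^2 > 0" using M by simp
  have t12: "t1 < t2"
  proof (rule ccontr)
    assume "\<not> t1 < t2" hence le: "t2 \<le> t1" by simp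
    have "t2^3 \<le> t1^3" by (rule power_mono) (use le t2 in auto)
    hence "M^2*t2^3 \<le> M^2*t1^3" using M2 by simp
    hence A: "r2*(1-t2) \<le> r1*(1-t1)" using t1 t2 by simp
    have "r2*(1-t1) \<le> r2*(1-t2)" using le r2 by simp
    hence "r2*(1-t1) \<le> r1*(1-t1)" using A by linarith
    hence "r2 \<le> r1" using t1 by simp
    thus False using r by simp
  qed
  have key: "r1 * t2^3 \<le> r2 * t1^3"
  proof -
    have e2: "r2*(1-t2)*t1^3 = M^2*t2^3*t1^3" using t2 by simp
    have e1: "r1*(1-t1)*t2^3 = M^2*t1^3*t2^3" using t1 by simp
    have h: "r2*(1-t2)*t1^3 \<le> r2*(1-t1)*t1^3" using t12 r2 t1 by (intro mult_right_mono mult_left_mono) auto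
    have e3: "r1*(1-t1)*t2^3 = r2*(1-t2)*t1^3" unfolding e1 e2 by (simp add: ac_simps)
    have e4: "(1-t1)*(r1 * t2^3) = r1*(1-t1)*t2^3" "(1-t1)*(r2 * t1^3) = r2*(1-t1)*t1^3" by (simp_all add: ac_simps)
    have "(1-t1)*(r1 * t2^3) \<le> (1-t1)*(r2 * t1^3)" unfolding e4 e3 by (rule h)
    thus ?thesis using t1 by simp
  qed
  define x where "x = t2 / t1"
  have x1: "1 \<le> x" using t12 t1 unfolding x_def by simp
  have x3: "x^3 \<le> r2/r1" unfolding x_def using key t1 r by (simp add: field_simps)
  define a where "a = 1/(2 * s)"
  have a0: "0 \<le> a" and a3: "1 \<le> 3*a" using s unfolding a_def by (auto simp: field_simps)
  have "x = x powr 1" using x1 by simp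
  also have "\<dots> \<le> x powr (3*a)" by (rule powr_mono) (use a3 x1 in auto)
  also have "\<dots> = (x powr 3) powr a" by (simp add: powr_powr)
  also have "\<dots> = (x^3) powr a" using x1 by simp
  also have "\<dots> \<le> (r2/r1) powr a" by (rule powr_mono2) (use a0 x1 x3 in auto)
  also have "\<dots> = r2 powr a / r1 powr a" by (simp add: powr_divide)
  finally have xR: "t2 / t1 \<le> r2 powr a / r1 powr a" unfolding x_def .
  have R1: "r1 powr a > 0" and R2: "r2 powr a > 0" using r r2 by auto
  have cross: "t2 * r1 powr a \<le> t1 * r2 powr a" using xR R1 R2 t1 by (simp add: field_simps)
  have "\<bar>M * t2 / (2 * r2 powr a)\<bar> \<le> \<bar>M * t1 / (2 * r1 powr a)\<bar>"
  proof -
    have "\<bar>M\<bar> * (t2 * r1 powr a) \<le> \<bar>M\<bar> * (t1 * r2 powr a)" using cross by (simp add: mult_left_mono)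
    thus ?thesis using R1 R2 t1 t2 by (simp add: abs_mult abs_divide field_simps)
  qed
  hence T1: "(M * t2 / (2 * r2 powr a))^2 \<le> (M * t1 / (2 * r1 powr a))^2" by (metis abs_le_square_iff)
  have e: "1 - 1/s < 0" using s by (simp add: field_simps)
  have T2: "r2 powr (1-1/s) < r1 powr (1-1/s)" by (rule powr_less_mono2_neg[OF e r])
  show ?thesis using T1 T2 t1(4) t2(4) unfolding a_def by simp
qed

lemma V_char:
  assumes rp: "0 < rho p" and s: "0 < s"
  shows "(sqrt (3 * (mu1 M (rho p) / (2 * rho p powr (1 / (2 * s))))^2 + rho p powr (1 - 1 / s)) = c)
     \<longleftrightarrow> sqrt (3 * (mu1 M (rho p) / 2)^2 + rho p) = c * rho p powr (1/(2 * s))"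
proof -
  define R where "R = rho p powr (1/(2 * s))"
  define q where "q = mu1 M (rho p)"
  have R0: "R > 0" using rp unfolding R_def by simp
  have R2: "R^2 = rho p powr (1/s)"
    unfolding R_def power2_eq_square powr_add[symmetric] by (simp add: field_simps)
  have pd: "rho p powr (1 - 1/s) = rho p / R^2" using rp by (simp add: R2 powr_diff)
  have inner: "3 * (q / (2 * R))^2 + rho p powr (1 - 1/s) = (3 * (q/2)^2 + rho p) / R^2"
    using R0 by (simp add: pd power_divide field_simps)
  have W0: "0 \<le> 3 * (q/2)^2 + rho p" using rp by simp
  have "sqrt ((3 * (q/2)^2 + rho p) / R^2) = sqrt (3 * (q/2)^2 + rho p) / R"
    using R0 by (simp add: real_sqrt_divide)
  hence "sqrt (3 * (q / (2 * R))^2 + rho p powr (1 - 1/s)) = sqrt (3 * (q/2)^2 + rho p) / R"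
    using inner by simp
  thus ?thesis using R0 unfolding R_def[symmetric] q_def[symmetric] by (auto simp: field_simps)
qed

lemma lam_Re: "j \<in> {2,3} \<Longrightarrow> Re (lam s M c rho n j) = - mu1 M (rho (nat \<bar>n\<bar>)) / 2"
  by (auto simp: lam_def mu_def mu2_def mu3_def)

lemma lam_Im2: "Im (lam s M c rho n 2) = sqrt (3 * (mu1 M (rho (nat \<bar>n\<bar>)) / 2)^2 + rho (nat \<bar>n\<bar>))
     + of_int (sgn n) * c * rho (nat \<bar>n\<bar>) powr (1 / (2 * s))"
  by (simp add: lam_def mu_def mu2_def)

lemma lam_Im3: "Im (lam s M c rho n 3) = - sqrt (3 * (mu1 M (rho (nat \<bar>n\<bar>)) / 2)^2 + rho (nat \<bar>n\<bar>))
     + of_int (sgn n) * c * rho (nat \<bar>n\<bar>) powr (1 / (2 * s))"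
  by (simp add: lam_def mu_def mu2_def mu3_def)

lemma collide:
  fixes n m :: int and j k :: nat
  assumes M: "M \<noteq> 0" and c: "0 < c"
    and posA: "\<forall>p. p \<ge> 1 \<longrightarrow> rho p > 0"
    and injA: "\<forall>p q. p \<ge> 1 \<longrightarrow> q \<ge> 1 \<longrightarrow> rho p = rho q \<longrightarrow> p = q"
    and nz: "n \<noteq> 0" "m \<noteq> 0" and jk: "j \<in> {2,3}" "k \<in> {2,3}" and ne: "(n,j) \<noteq> (m,k)"
    and eq: "lam s M c rho n j = lam s M c rho m k"
  shows "\<exists>p\<ge>1. sqrt (3 * (mu1 M (rho p) / 2)^2 + rho p) = c * rho p powr (1/(2 * s))
           \<and> ((n = - int p \<and> j = 2 \<and> m = int p \<and> k = 3) \<or> (n = int p \<and> j = 3 \<and> m = - int p \<and> k = 2))"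
proof -
  have pos: "\<And>p. p \<ge> 1 \<Longrightarrow> rho p > 0" using posA by blast
  have inj: "\<And>p q. p \<ge> 1 \<Longrightarrow> q \<ge> 1 \<Longrightarrow> rho p = rho q \<Longrightarrow> p = q" using injA by blast
  define p where "p = nat \<bar>n\<bar>"
  define q where "q = nat \<bar>m\<bar>"
  have p1: "p \<ge> 1" and q1: "q \<ge> 1" using nz unfolding p_def q_def by auto
  have "Re (lam s M c rho n j) = Re (lam s M c rho m k)" using eq by simp
  hence "mu1 M (rho p) = mu1 M (rho q)" using lam_Re[OF jk(1)] lam_Re[OF jk(2)] unfolding p_def q_def by simp
  hence "rho p = rho q" using mu1_inj pos p1 q1 M by blast
  hence pq: "p = q" using inj p1 q1 by blast
  hence nm: "m = n \<or> m = - n" unfolding p_def q_def by auto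
  define W where "W = sqrt (3 * (mu1 M (rho p) / 2)^2 + rho p)"
  define R where "R = rho p powr (1/(2 * s))"
  have W0: "W > 0" using pos[OF p1] unfolding W_def by (intro real_sqrt_gt_zero add_nonneg_pos) auto
  have R0: "R > 0" using pos[OF p1] unfolding R_def by simp
  have cR: "c * R > 0" using c R0 by simp
  have Im: "Im (lam s M c rho n j) = Im (lam s M c rho m k)" using eq by simp
  have I2n: "Im (lam s M c rho n 2) = W + of_int (sgn n) * c * R" unfolding W_def R_def p_def by (rule lam_Im2)
  have I3n: "Im (lam s M c rho n 3) = - W + of_int (sgn n) * c * R" unfolding W_def R_def p_def by (rule lam_Im3)
  have I2m: "Im (lam s M c rho m 2) = W + of_int (sgn m) * c * R" unfolding W_def R_def pq q_def by (rule lam_Im2)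
  have I3m: "Im (lam s M c rho m 3) = - W + of_int (sgn m) * c * R" unfolding W_def R_def pq q_def by (rule lam_Im3)
  have sg: "sgn n = 1 \<or> sgn n = -1" using nz by (auto simp: sgn_if)
  have sgm: "m = - n \<Longrightarrow> sgn m = - sgn n" by simp
  show ?thesis
  proof (cases "m = n")
    case True
    hence "j \<noteq> k" using ne by simp
    hence "(j = 2 \<and> k = 3) \<or> (j = 3 \<and> k = 2)" using jk by auto
    thus ?thesis using Im I2n I3n I2m I3m True W0 by auto
  next
    case False
    hence mn: "m = - n" using nm by simp
    have nn: "n = - int p \<or> n = int p" unfolding p_def by auto
    consider "j = 2" "k = 2" | "j = 3" "k = 3" | "j = 2" "k = 3" | "j = 3" "k = 2" using jk by auto
    thus ?thesis
    proof cases
      case 1 thus ?thesis using Im I2n I2m sgm[OF mn] sg cR by auto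
    next
      case 2 thus ?thesis using Im I3n I3m sgm[OF mn] sg cR by auto
    next
      case 3
      hence e: "W + of_int (sgn n) * c * R = - W - of_int (sgn n) * c * R" using Im I2n I3m sgm[OF mn] by simp
      have "of_int (sgn n) = (-1::real)"
      proof (rule ccontr)
        assume "of_int (sgn n) \<noteq> (-1::real)"
        hence "of_int (sgn n) = (1::real)" using sg by auto
        hence "W + c * R = - W - c * R" using e by simp
        thus False using W0 cR by linarith
      qed
      hence "sgn n = -1" by simp
      hence "n < 0" by (simp add: sgn_if split: if_splits)
      hence "n = - int p" "m = int p" using mn unfolding p_def by auto
      moreover have "W = c * R" using e \<open>sgn n = -1\<close> by (simp add: algebra_simps)
      ultimately show ?thesis using 3 p1 unfolding W_def R_def by blast
    next
      case 4
      hence e: "- W + of_int (sgn n) * c * R = W - of_int (sgn n) * c * R" using Im I3n I2m sgm[OF mn] by simp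
      have "of_int (sgn n) = (1::real)"
      proof (rule ccontr)
        assume "of_int (sgn n) \<noteq> (1::real)"
        hence "of_int (sgn n) = (-1::real)" using sg by auto
        hence "- W - c * R = W + c * R" using e by simp
        thus False using W0 cR by linarith
      qed
      hence "sgn n = 1" by simp
      hence "n > 0" by (simp add: sgn_if split: if_splits)
      hence "n = int p" "m = - int p" using mn unfolding p_def by auto
      moreover have "W = c * R" using e \<open>sgn n = 1\<close> by (simp add: algebra_simps)
      ultimately show ?thesis using 4 p1 unfolding W_def R_def by blast
    qed
  qed
qed

lemma collide_conv:
  assumes "sqrt (3 * (mu1 M (rho p) / 2)^2 + rho p) = c * rho p powr (1/(2 * s))" "p \<ge> 1"
  shows "lam s M c rho (- int p) 2 = lam s M c rho (int p) 3"
proof (rule complex_eqI)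
  show "Re (lam s M c rho (- int p) 2) = Re (lam s M c rho (int p) 3)"
    using lam_Re[of 2] lam_Re[of 3] by simp
  have "sgn (- int p) = -1" "sgn (int p) = 1" using assms(2) by auto
  thus "Im (lam s M c rho (- int p) 2) = Im (lam s M c rho (int p) 3)"
    using lam_Im2[of s M c rho "- int p"] lam_Im3[of s M c rho "int p"] assms(1) by simp
qed

lemma fin_sep:
  assumes "finite A" "\<And>x. x \<in> A \<Longrightarrow> P x \<Longrightarrow> 0 < (f x :: real)"
  shows "\<exists>u>0. \<forall>x\<in>A. P x \<longrightarrow> u \<le> f x"
proof -
  define B where "B = insert 1 (f ` {x\<in>A. P x})"
  have fB: "finite B" using assms(1) unfolding B_def by simp
  have "Min B > 0" using fB assms(2) unfolding B_def by (subst Min_gr_iff) auto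
  moreover have "\<forall>x\<in>A. P x \<longrightarrow> Min B \<le> f x" using fB unfolding B_def by (auto intro: Min_le)
  ultimately show ?thesis by blast
qed



theorem lemma3p8:
  fixes s M \<gamma> c :: real and rho :: "nat \<Rightarrow> real"
  assumes s_gt: "1/2 < s" and s_lt: "s < 1"
    and M_nz: "M \<noteq> 0"
    and rho_pos: "0 < rho 1"
    and rho_simple: "\<And>n. n \<ge> 1 \<Longrightarrow> rho n < rho (Suc n)"
    and rho_inf: "filterlim rho at_top sequentially"
    and gamma_ge: "\<gamma> \<ge> pi / 2"
    and gap: "\<forall>\<^sub>F n in sequentially.
                 rho (Suc n) powr (1 / (2 * s)) - rho n powr (1 / (2 * s)) \<ge> \<gamma>"
    and c_pos: "0 < c" and c_ne: "c \<noteq> \<gamma>"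
  shows
    "(c \<notin> Vset s M rho \<longrightarrow>
       (\<forall>N::nat. N \<ge> 1 \<longrightarrow> (\<exists>\<upsilon>>0. \<forall>n m :: int. \<forall>j k :: nat.
          (n, j) \<noteq> (m, k) \<and> n \<noteq> 0 \<and> m \<noteq> 0 \<and> \<bar>n\<bar> \<le> int N \<and> \<bar>m\<bar> \<le> int N
          \<and> j \<in> {2, 3} \<and> k \<in> {2, 3}
          \<longrightarrow> cmod (lam s M c rho n j - lam s M c rho m k) \<ge> \<upsilon>)))
     \<and>
     (c \<in> Vset s M rho \<longrightarrow>
       (\<exists>nc::nat. nc \<ge> 1
          \<and> lam s M c rho (- int nc) 2 = lam s M c rho (int nc) 3
          \<and> (\<forall>n'::nat. n' \<ge> 1 \<and> lam s M c rho (- int n') 2 = lam s M c rho (int n') 3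
                \<longrightarrow> n' = nc)
          \<and> (\<forall>N::nat. N \<ge> 1 \<longrightarrow> (\<exists>\<upsilon>>0. \<forall>n m :: int. \<forall>j k :: nat.
               (n, j) \<noteq> (m, k) \<and> n \<noteq> 0 \<and> m \<noteq> 0 \<and> \<bar>n\<bar> \<le> int N \<and> \<bar>m\<bar> \<le> int N
               \<and> j \<in> {2, 3} \<and> k \<in> {2, 3}
               \<and> {(n, j), (m, k)} \<noteq> {(- int nc, 2), (int nc, 3)}
               \<longrightarrow> cmod (lam s M c rho n j - lam s M c rho m k) \<ge> \<upsilon>))))"
proof -
  have pos: "\<And>p. p \<ge> 1 \<Longrightarrow> rho p > 0"
  proof -
    fix p :: nat assume "p \<ge> 1"
    thus "rho p > 0"
    proof (induction p rule: dec_induct)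
      case base thus ?case using rho_pos .
    next
      case (step q) thus ?case using rho_simple[of q] by simp
    qed
  qed
  have mono: "\<And>p q. 1 \<le> p \<Longrightarrow> p < q \<Longrightarrow> rho p < rho q"
  proof -
    fix p q :: nat assume p1: "1 \<le> p" and pq: "p < q"
    hence "Suc p \<le> q" by simp
    thus "rho p < rho q"
    proof (induction q rule: dec_induct)
      case base thus ?case using rho_simple[OF p1] .
    next
      case (step q) thus ?case using rho_simple[of q] p1 by simp
    qed
  qed
  have inj: "\<And>p q. p \<ge> 1 \<Longrightarrow> q \<ge> 1 \<Longrightarrow> rho p = rho q \<Longrightarrow> p = q"
    by (metis linorder_neqE_nat mono order_less_irrefl)
  have s0: "0 < s" using s_gt by simp
  define Wc where "Wc = (\<lambda>p. sqrt (3 * (mu1 M (rho p) / 2)^2 + rho p) = c * rho p powr (1/(2 * s)))"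
  have Vchar: "c \<in> Vset s M rho \<longleftrightarrow> (\<exists>p\<ge>1. Wc p)"
  proof -
    have "c \<in> Vset s M rho \<longleftrightarrow> (\<exists>p\<ge>1. sqrt (3 * (mu1 M (rho p) / (2 * rho p powr (1 / (2 * s))))^2 + rho p powr (1 - 1 / s)) = c)"
      unfolding Vset_def by auto
    also have "\<dots> \<longleftrightarrow> (\<exists>p\<ge>1. Wc p)" unfolding Wc_def using V_char[where rho=rho and s=s, OF pos s0] by blast
    finally show ?thesis .
  qed
  have uniq: "\<And>p q. p \<ge> 1 \<Longrightarrow> q \<ge> 1 \<Longrightarrow> Wc p \<Longrightarrow> Wc q \<Longrightarrow> p = q"
  proof (rule ccontr)
    fix p q :: nat assume p1: "p \<ge> 1" and q1: "q \<ge> 1" and wp: "Wc p" and wq: "Wc q" and ne: "p \<noteq> q"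
    define V where "V = (\<lambda>r. 3*(mu1 M r/(2*r powr (1/(2 * s))))^2 + r powr (1-1/s))"
    have vp: "sqrt (V (rho p)) = c" using wp V_char[where rho=rho and p=p and s=s, OF pos[OF p1] s0] unfolding Wc_def V_def by blast
    have vq: "sqrt (V (rho q)) = c" using wq V_char[where rho=rho and p=q and s=s, OF pos[OF q1] s0] unfolding Wc_def V_def by blast
    have "sqrt (V (rho p)) = sqrt (V (rho q))" using vp vq by (rule trans[OF _ sym])
    hence "V (rho p) = V (rho q)" by (rule real_sqrt_eq_iff[THEN iffD1])
    moreover have "V (rho p) \<noteq> V (rho q)"
    proof (cases "p < q")
      case True thus ?thesis using V_decr[OF s_gt s_lt M_nz pos[OF p1] mono[OF p1 True]] unfolding V_def by simp
    next
      case False hence "q < p" using ne by simp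
      thus ?thesis using V_decr[OF s_gt s_lt M_nz pos[OF q1] mono[OF q1 \<open>q < p\<close>]] unfolding V_def by simp
    qed
    ultimately show False by simp
  qed
  define A where "A = (\<lambda>N::nat. ({- int N..int N} \<times> {2::nat,3}) \<times> ({- int N..int N} \<times> {2::nat,3}))"
  have finA: "\<And>N. finite (A N)" unfolding A_def by simp
  have memA: "\<And>N n m j k. \<bar>n\<bar> \<le> int N \<Longrightarrow> \<bar>m\<bar> \<le> int N \<Longrightarrow> j \<in> {2,3} \<Longrightarrow> k \<in> {2,3} \<Longrightarrow> ((n,j),(m,k)) \<in> A N"
    unfolding A_def by auto
  have memA': "\<And>N n m j k. ((n,j),(m,k)) \<in> A N \<Longrightarrow> j \<in> {2,3} \<and> k \<in> {2,3}"
    unfolding A_def by auto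
  have posA: "\<forall>p. p \<ge> 1 \<longrightarrow> rho p > 0" using pos by blast
  have injA: "\<forall>p q. p \<ge> 1 \<longrightarrow> q \<ge> 1 \<longrightarrow> rho p = rho q \<longrightarrow> p = q" using inj by blast
  note coll = collide[where rho=rho and s=s and M=M and c=c, OF M_nz c_pos posA injA]
  show ?thesis
  proof (intro conjI impI)
    assume cV: "c \<notin> Vset s M rho"
    show "\<forall>N::nat. N \<ge> 1 \<longrightarrow> (\<exists>\<upsilon>>0. \<forall>n m :: int. \<forall>j k :: nat.
          (n, j) \<noteq> (m, k) \<and> n \<noteq> 0 \<and> m \<noteq> 0 \<and> \<bar>n\<bar> \<le> int N \<and> \<bar>m\<bar> \<le> int N
          \<and> j \<in> {2, 3} \<and> k \<in> {2, 3}
          \<longrightarrow> cmod (lam s M c rho n j - lam s M c rho m k) \<ge> \<upsilon>)"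
    proof (intro allI impI)
      fix N :: nat
      define P where "P = (\<lambda>((n::int,j::nat),(m::int,k::nat)). (n, j) \<noteq> (m, k) \<and> n \<noteq> 0 \<and> m \<noteq> 0)"
      define f where "f = (\<lambda>((n,j),(m,k)). cmod (lam s M c rho n j - lam s M c rho m k))"
      have "\<exists>u>0. \<forall>x\<in>A N. P x \<longrightarrow> u \<le> f x"
      proof (rule fin_sep[OF finA])
        fix x assume xA: "x \<in> A N" and Px: "P x"
        obtain n j m k where x: "x = ((n,j),(m,k))" by (metis prod.collapse)
        have jk: "j \<in> {2,3}" "k \<in> {2,3}" using memA' xA x by auto
        have h: "(n, j) \<noteq> (m, k)" "n \<noteq> 0" "m \<noteq> 0" using Px x unfolding P_def by auto
        have "lam s M c rho n j \<noteq> lam s M c rho m k"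
        proof
          assume eq: "lam s M c rho n j = lam s M c rho m k"
          from coll[where n=n and m=m and j=j and k=k, OF h(2) h(3) jk(1) jk(2) h(1) eq]
          obtain p where "p \<ge> 1" "Wc p" unfolding Wc_def by blast
          thus False using cV Vchar by blast
        qed
        thus "0 < f x" using x unfolding f_def by simp
      qed
      then obtain u where u: "u > 0" "\<forall>x\<in>A N. P x \<longrightarrow> u \<le> f x" by blast
      show "\<exists>\<upsilon>>0. \<forall>n m :: int. \<forall>j k :: nat.
          (n, j) \<noteq> (m, k) \<and> n \<noteq> 0 \<and> m \<noteq> 0 \<and> \<bar>n\<bar> \<le> int N \<and> \<bar>m\<bar> \<le> int N
          \<and> j \<in> {2, 3} \<and> k \<in> {2, 3}
          \<longrightarrow> cmod (lam s M c rho n j - lam s M c rho m k) \<ge> \<upsilon>"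
      proof (intro exI[of _ u] conjI allI impI)
        fix n m :: int and j k :: nat
        assume h: "(n, j) \<noteq> (m, k) \<and> n \<noteq> 0 \<and> m \<noteq> 0 \<and> \<bar>n\<bar> \<le> int N \<and> \<bar>m\<bar> \<le> int N
          \<and> j \<in> {2, 3} \<and> k \<in> {2, 3}"
        hence xA: "((n,j),(m,k)) \<in> A N" using memA by blast
        have "P ((n,j),(m,k))" using h unfolding P_def by simp
        hence "u \<le> f ((n,j),(m,k))" using u(2) xA by blast
        thus "cmod (lam s M c rho n j - lam s M c rho m k) \<ge> u" unfolding f_def by simp
      qed (use u in simp)
    qed
  next
    assume cV: "c \<in> Vset s M rho"
    then obtain nc where nc1: "nc \<ge> 1" and wnc: "Wc nc" using Vchar by blast
    show "\<exists>nc::nat. nc \<ge> 1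
          \<and> lam s M c rho (- int nc) 2 = lam s M c rho (int nc) 3
          \<and> (\<forall>n'::nat. n' \<ge> 1 \<and> lam s M c rho (- int n') 2 = lam s M c rho (int n') 3
                \<longrightarrow> n' = nc)
          \<and> (\<forall>N::nat. N \<ge> 1 \<longrightarrow> (\<exists>\<upsilon>>0. \<forall>n m :: int. \<forall>j k :: nat.
               (n, j) \<noteq> (m, k) \<and> n \<noteq> 0 \<and> m \<noteq> 0 \<and> \<bar>n\<bar> \<le> int N \<and> \<bar>m\<bar> \<le> int N
               \<and> j \<in> {2, 3} \<and> k \<in> {2, 3}
               \<and> {(n, j), (m, k)} \<noteq> {(- int nc, 2), (int nc, 3)}
               \<longrightarrow> cmod (lam s M c rho n j - lam s M c rho m k) \<ge> \<upsilon>))"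
    proof (intro exI[of _ nc] conjI allI impI)
      show "nc \<ge> 1" by (rule nc1)
      show "lam s M c rho (- int nc) 2 = lam s M c rho (int nc) 3"
        using wnc unfolding Wc_def by (rule collide_conv[OF _ nc1])
    next
      fix n' :: nat assume h: "n' \<ge> 1 \<and> lam s M c rho (- int n') 2 = lam s M c rho (int n') 3"
      have h1: "- int n' \<noteq> 0" "int n' \<noteq> 0" using h by auto
      have h2: "(- int n', 2::nat) \<noteq> (int n', 3)" by simp
      from coll[where n="- int n'" and m="int n'" and j=2 and k=3, OF h1(1) h1(2) _ _ h2 conjunct2[OF h]]
      obtain p where p: "p \<ge> 1" "Wc p"
        "(- int n' = - int p \<and> (2::nat) = 2 \<and> int n' = int p \<and> (3::nat) = 3) \<or> (- int n' = int p \<and> (2::nat) = 3 \<and> int n' = - int p \<and> (3::nat) = 2)"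
        unfolding Wc_def by auto
      hence "n' = p" by auto
      thus "n' = nc" using uniq[OF p(1) nc1 p(2) wnc] by simp
    next
      fix N :: nat
      define P where "P = (\<lambda>((n::int,j::nat),(m::int,k::nat)). (n, j) \<noteq> (m, k) \<and> n \<noteq> 0 \<and> m \<noteq> 0 \<and> {(n, j), (m, k)} \<noteq> {(- int nc, 2::nat), (int nc, 3)})"
      define f where "f = (\<lambda>((n,j),(m,k)). cmod (lam s M c rho n j - lam s M c rho m k))"
      have "\<exists>u>0. \<forall>x\<in>A N. P x \<longrightarrow> u \<le> f x"
      proof (rule fin_sep[OF finA])
        fix x assume xA: "x \<in> A N" and Px: "P x"
        obtain n j m k where x: "x = ((n,j),(m,k))" by (metis prod.collapse)
        have jk: "j \<in> {2,3}" "k \<in> {2,3}" using memA' xA x by auto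
        have h: "(n, j) \<noteq> (m, k)" "n \<noteq> 0" "m \<noteq> 0" "{(n, j), (m, k)} \<noteq> {(- int nc, 2::nat), (int nc, 3)}"
          using Px x unfolding P_def by auto
        have "lam s M c rho n j \<noteq> lam s M c rho m k"
        proof
          assume eq: "lam s M c rho n j = lam s M c rho m k"
          from coll[where n=n and m=m and j=j and k=k, OF h(2) h(3) jk(1) jk(2) h(1) eq]
          obtain p where p: "p \<ge> 1" "Wc p"
            "(n = - int p \<and> j = 2 \<and> m = int p \<and> k = 3) \<or> (n = int p \<and> j = 3 \<and> m = - int p \<and> k = 2)"
            unfolding Wc_def by blast
          have "p = nc" using uniq[OF p(1) nc1 p(2) wnc] .
          hence "{(n, j), (m, k)} = {(- int nc, 2::nat), (int nc, 3)}" using p(3) by auto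
          thus False using h(4) by simp
        qed
        thus "0 < f x" using x unfolding f_def by simp
      qed
      then obtain u where u: "u > 0" "\<forall>x\<in>A N. P x \<longrightarrow> u \<le> f x" by blast
      show "\<exists>\<upsilon>>0. \<forall>n m :: int. \<forall>j k :: nat.
               (n, j) \<noteq> (m, k) \<and> n \<noteq> 0 \<and> m \<noteq> 0 \<and> \<bar>n\<bar> \<le> int N \<and> \<bar>m\<bar> \<le> int N
               \<and> j \<in> {2, 3} \<and> k \<in> {2, 3}
               \<and> {(n, j), (m, k)} \<noteq> {(- int nc, 2), (int nc, 3)}
               \<longrightarrow> cmod (lam s M c rho n j - lam s M c rho m k) \<ge> \<upsilon>"
      proof (intro exI[of _ u] conjI allI impI)
        fix n m :: int and j k :: nat
        assume h: "(n, j) \<noteq> (m, k) \<and> n \<noteq> 0 \<and> m \<noteq> 0 \<and> \<bar>n\<bar> \<le> int N \<and> \<bar>m\<bar> \<le> int N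
               \<and> j \<in> {2, 3} \<and> k \<in> {2, 3}
               \<and> {(n, j), (m, k)} \<noteq> {(- int nc, 2), (int nc, 3)}"
        hence xA: "((n,j),(m,k)) \<in> A N" using memA by blast
        have "P ((n,j),(m,k))" using h unfolding P_def by simp
        hence "u \<le> f ((n,j),(m,k))" using u(2) xA by blast
        thus "cmod (lam s M c rho n j - lam s M c rho m k) \<ge> u" unfolding f_def by simp
      qed (use u in simp)
    qed
  qed
qed

end
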